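(* For every $n\geq1$, $$2^n\sum_{\sigma\in\mathfrak S_{n+1}}u^{{\rm rda}(\sigma)}\Bigl(-\frac12\Bigr)^{{\rm LRmin}(\sigma)+{\rm RLmin}(\sigma)-2}=\begin{cases}\bigl((1+u)^2-4\bigr)^{\lfloor n/2\rfloor},& n\text{ even},\\ -(1+u)\bigl((1+u)^2-4\bigr)^{\lfloor n/2\rfloor},& n\text{ odd}.\end{cases}$$
   Context: For $\sigma=\sigma_1\cdots\sigma_m\in\mathfrak S_m$: ${\rm rda}(\sigma)$ (right double ascents) is the number of $i$ with $1<i\le m$ and $\sigma_{i-1}<\sigma_i<\sigma_{i+1}$, with the convention $\sigma_{m+1}=+\infty$; ${\rm LRmin}(\sigma)$ is the number of $i$ with $\sigma_j>\sigma_i$ for all $j<i$; ${\rm RLmin}(\sigma)$ is the number of $i$ with $\sigma_j>\sigma_i$ for all $j>i$. *)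

theory Defs
  imports Complex_Main "HOL-Combinatorics.Multiset_Permutations"
begin

text \<open>A permutation sigma = sigma_1 ... sigma_m of {1..m} is a list; list entry s ! k
  (0-indexed) is sigma_(k+1).\<close>

text \<open>Right double ascents: positions i (1-indexed) with 1 < i <= m and
  sigma_(i-1) < sigma_i < sigma_(i+1), with sigma_(m+1) = +infinity.
  In 0-indexed form: k = i - 1 with 1 <= k < m.\<close>
definition rda :: "nat list \<Rightarrow> nat" where
  "rda s = card {k. 1 \<le> k \<and> k < length s \<and> s ! (k - 1) < s ! k \<and>
                    (k + 1 < length s \<longrightarrow> s ! k < s ! (k + 1))}"

definition LRmin :: "nat list \<Rightarrow> nat" where
  "LRmin s = card {i. i < length s \<and> (\<forall>j<i. s ! j > s ! i)}"

definition RLmin :: "nat list \<Rightarrow> nat" where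
  "RLmin s = card {i. i < length s \<and> (\<forall>j. i < j \<and> j < length s \<longrightarrow> s ! j > s ! i)}"

end

theory Submission
  imports Defs "HOL-Computational_Algebra.Formal_Power_Series"
begin

datatype bd = NI | FI nat | PI

fun ltL :: "bd \<Rightarrow> nat \<Rightarrow> bool" where
  "ltL NI v = True" | "ltL (FI a) v = (a < v)" | "ltL PI v = False"

fun ltR :: "nat \<Rightarrow> bd \<Rightarrow> bool" where
  "ltR v NI = False" | "ltR v (FI a) = (v < a)" | "ltR v PI = True"

fun cnt :: "bd \<Rightarrow> bd \<Rightarrow> nat list \<Rightarrow> nat" where
  "cnt L R [] = 0"
| "cnt L R [v] = (if ltL L v \<and> ltR v R then 1 else 0)"
| "cnt L R (v # w # ws) = (if ltL L v \<and> v < w then 1 else 0) + cnt (FI v) R (w # ws)"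

fun lrc :: "bd \<Rightarrow> nat list \<Rightarrow> nat" where
  "lrc B [] = 0"
| "lrc B (v # ws) = (if ltR v B then Suc (lrc (FI v) ws) else lrc B ws)"

fun rlc :: "nat list \<Rightarrow> nat" where
  "rlc [] = 0"
| "rlc (v # ws) = (if \<forall>x\<in>set ws. v < x then 1 else 0) + rlc ws"

lemma card_Suc_split:
  "card {k. k < Suc n \<and> P k} = (if P 0 then 1 else 0) + card {k. k < n \<and> P (Suc k)}"
proof -
  have e: "{k. k < Suc n \<and> P k} = (if P 0 then {0} else {}) \<union> Suc ` {k. k < n \<and> P (Suc k)}"
    by (auto simp: less_Suc_eq_0_disj)
  have "card ((if P 0 then {0} else {}) \<union> Suc ` {k. k < n \<and> P (Suc k)}) =
        card (if P 0 then {0} else {} :: nat set) + card (Suc ` {k. k < n \<and> P (Suc k)})"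
    by (rule card_Un_disjoint) auto
  also have "card (Suc ` {k. k < n \<and> P (Suc k)}) = card {k. k < n \<and> P (Suc k)}"
    by (rule card_image) auto
  finally show ?thesis using e by simp
qed

lemma cnt_card:
  "cnt L R s = card {k. k < length s \<and> (if k = 0 then ltL L (s!0) else s!(k-1) < s!k) \<and>
      (if k+1 < length s then s!k < s!(k+1) else ltR (s!k) R)}"
proof (induction L R s rule: cnt.induct)
  case (1 L R)
  then show ?case by simp
next
  case (2 L R v)
  then show ?case by (simp add: card_Suc_split)
next
  case (3 L R v w ws)
  have e: "length (v#w#ws) = Suc (length (w#ws))" by simp
  show ?case
    apply (simp only: cnt.simps(3) "3.IH" e card_Suc_split[of "length (w#ws)"])
    apply (rule arg_cong2[where f="(+)"])
     apply simp
    apply (rule arg_cong[where f=card])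
    apply (auto simp: nth_Cons split: nat.splits)
    done
qed

lemma rda_cnt: "rda s = cnt PI PI s"
  unfolding rda_def cnt_card
  by (intro arg_cong[where f=card]) (auto split: if_splits)

lemma ltR_mono1: "ltR v B \<Longrightarrow> x < v \<Longrightarrow> ltR x B"
  by (cases B) auto
lemma ltR_mono2: "\<not> ltR v B \<Longrightarrow> ltR x B \<Longrightarrow> x < v"
  by (cases B) auto

lemma lrc_card:
  "lrc B s = card {i. i < length s \<and> (\<forall>j<i. s!i < s!j) \<and> ltR (s!i) B}"
proof (induction s arbitrary: B)
  case Nil
  then show ?case by simp
next
  case (Cons v ws)
  have *: "(\<forall>j<Suc i. ws!i < (v#ws)!j) = (ws!i < v \<and> (\<forall>j<i. ws!i < ws!j))" for i
    by (auto simp: less_Suc_eq_0_disj)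
  show ?case
  proof (cases "ltR v B")
    case True
    then show ?thesis
      apply (simp only: length_Cons card_Suc_split Cons.IH lrc.simps if_True)
      apply (simp add: * )
      apply (intro arg_cong[where f=card]) 
      using ltR_mono1 by auto
  next
    case False
    then show ?thesis
      apply (simp only: length_Cons card_Suc_split Cons.IH lrc.simps if_False)
      apply (simp add: * )
      apply (intro arg_cong[where f=card]) 
      using ltR_mono2 by auto
  qed
qed

lemma LRmin_lrc: "LRmin s = lrc PI s"
  unfolding LRmin_def lrc_card by simp

lemma rlc_card:
  "rlc s = card {i. i < length s \<and> (\<forall>j. i < j \<and> j < length s \<longrightarrow> s ! j > s ! i)}"
proof (induction s)
  case Nil
  then show ?case by simp
next
  case (Cons v ws)
  have a: "(\<forall>j. 0 < j \<and> j < Suc (length ws) \<longrightarrow> (v#ws) ! j > v) = (\<forall>x\<in>set ws. v < x)"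
  proof (rule iffI)
    assume h: "\<forall>j. 0 < j \<and> j < Suc (length ws) \<longrightarrow> (v#ws) ! j > v"
    show "\<forall>x\<in>set ws. v < x"
    proof
      fix x assume "x \<in> set ws"
      then obtain j where "j < length ws" "ws ! j = x" by (auto simp: in_set_conv_nth)
      then show "v < x" using h[rule_format, of "Suc j"] by simp
    qed
  next
    assume h: "\<forall>x\<in>set ws. v < x"
    show "\<forall>j. 0 < j \<and> j < Suc (length ws) \<longrightarrow> (v#ws) ! j > v"
    proof (intro allI impI)
      fix j assume j: "0 < j \<and> j < Suc (length ws)"
      then obtain j' where "j = Suc j'" by (cases j) auto
      then show "(v#ws) ! j > v" using j h by simp
    qed
  qed
  have b: "(\<forall>j. Suc i < j \<and> j < Suc (length ws) \<longrightarrow> (v#ws) ! j > ws ! i) =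
           (\<forall>j. i < j \<and> j < length ws \<longrightarrow> ws ! j > ws ! i)" for i
  proof (rule iffI)
    assume h: "\<forall>j. Suc i < j \<and> j < Suc (length ws) \<longrightarrow> (v#ws) ! j > ws ! i"
    show "\<forall>j. i < j \<and> j < length ws \<longrightarrow> ws ! j > ws ! i"
    proof (intro allI impI)
      fix j assume "i < j \<and> j < length ws"
      then show "ws ! j > ws ! i" using h[rule_format, of "Suc j"] by simp
    qed
  next
    assume h: "\<forall>j. i < j \<and> j < length ws \<longrightarrow> ws ! j > ws ! i"
    show "\<forall>j. Suc i < j \<and> j < Suc (length ws) \<longrightarrow> (v#ws) ! j > ws ! i"
    proof (intro allI impI)
      fix j assume j: "Suc i < j \<and> j < Suc (length ws)"
      then obtain j' where "j = Suc j'" by (cases j) auto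
      then show "(v#ws) ! j > ws ! i" using j h by simp
    qed
  qed
  show ?case
    apply (simp only: length_Cons card_Suc_split rlc.simps Cons.IH)
    using a b by simp
qed

lemma RLmin_rlc: "RLmin s = rlc s"
  unfolding RLmin_def rlc_card by simp


definition lb :: "bd \<Rightarrow> nat list \<Rightarrow> bd" where
  "lb L a = (if a = [] then L else FI (last a))"
definition rb :: "nat list \<Rightarrow> bd \<Rightarrow> bd" where
  "rb b R = (if b = [] then R else FI (hd b))"

lemma cnt_Cons_L: "cnt L R (v # ws) = (if ltL L v \<and> ltR v (rb ws R) then 1 else 0) + cnt (FI v) R ws"
  by (cases ws) (auto simp: rb_def)

lemma cnt_append:
  "cnt L R (a @ m # b) = cnt L (FI m) a + (if ltL (lb L a) m \<and> ltR m (rb b R) then 1 else 0)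
     + cnt (FI m) R b"
proof (induction a arbitrary: L)
  case Nil
  then show ?case by (simp add: cnt_Cons_L lb_def)
next
  case (Cons v a)
  show ?case
  proof (cases a)
    case Nil
    then show ?thesis by (simp add: cnt_Cons_L lb_def rb_def)
  next
    case (Cons w a')
    then show ?thesis using Cons.IH[of "FI v"] by (simp add: lb_def)
  qed
qed

lemma cnt_FI_R: "\<forall>x\<in>set a. m < x \<Longrightarrow> cnt L (FI m) a = cnt L NI a"
proof (induction a arbitrary: L)
  case Nil
  then show ?case by simp
next
  case (Cons v a)
  then show ?case by (cases a) auto
qed

lemma cnt_FI_L: "\<forall>x\<in>set b. m < x \<Longrightarrow> cnt (FI m) R b = cnt NI R b"
  by (cases b) (auto simp: cnt_Cons_L)

lemma lrc_append:
  "\<forall>x\<in>set a. m < x \<Longrightarrow> ltR m B \<Longrightarrow> lrc B (a @ m # b) = lrc B a + Suc (lrc (FI m) b)"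
proof (induction a arbitrary: B)
  case Nil
  then show ?case by simp
next
  case (Cons v a)
  then show ?case by auto
qed

lemma lrc_zero: "\<forall>x\<in>set b. m < x \<Longrightarrow> lrc (FI m) b = 0"
  by (induction b) auto

lemma rlc_append:
  "\<forall>x\<in>set a. m < x \<Longrightarrow> \<forall>x\<in>set b. m < x \<Longrightarrow> rlc (a @ m # b) = Suc (rlc b)"
proof (induction a)
  case Nil
  then show ?case by simp
next
  case (Cons v a)
  then show ?case by auto
qed

lemma lrc_pos: "s \<noteq> [] \<Longrightarrow> lrc PI s \<ge> 1"
  by (cases s) auto

lemma rlc_pos: "s \<noteq> [] \<Longrightarrow> rlc s \<ge> 1"
proof (induction s)
  case Nil then show ?case by simp
next
  case (Cons v ws) then show ?case by (cases ws) auto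
qed

lemma perm_decomp:
  fixes f :: "nat list \<Rightarrow> 'b::comm_monoid_add"
  assumes fin: "finite S" and m: "m \<in> S"
  shows "(\<Sum>s\<in>permutations_of_set S. f s) =
    (\<Sum>X\<in>Pow (S - {m}). \<Sum>a\<in>permutations_of_set X. \<Sum>b\<in>permutations_of_set (S - {m} - X). f (a @ m # b))"
proof -
  let ?P = "\<lambda>x. x \<noteq> m"
  let ?T = "Sigma (Pow (S - {m})) (\<lambda>X. permutations_of_set X \<times> permutations_of_set (S - {m} - X))"
  have fT: "finite (Pow (S - {m}))" using fin by simp
  have c1: "(\<Sum>X\<in>Pow (S - {m}). \<Sum>a\<in>permutations_of_set X. \<Sum>b\<in>permutations_of_set (S - {m} - X). f (a @ m # b))
      = (\<Sum>X\<in>Pow (S - {m}). \<Sum>ab\<in>permutations_of_set X \<times> permutations_of_set (S - {m} - X). f (fst ab @ m # snd ab))"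
    by (simp add: sum.cartesian_product case_prod_beta)
  have c2: "(\<Sum>X\<in>Pow (S - {m}). \<Sum>ab\<in>permutations_of_set X \<times> permutations_of_set (S - {m} - X). f (fst ab @ m # snd ab)) = (\<Sum>z\<in>?T. f (fst (snd z) @ m # snd (snd z)))"
    by (subst sum.Sigma) (use fT in \<open>auto simp: split_beta\<close>)
  have A1: "takeWhile ?P s @ m # tl (dropWhile ?P s) = s" if s: "s \<in> permutations_of_set S" for s
  proof -
    have ms: "m \<in> set s" using s m by (auto dest: permutations_of_setD)
    have ne: "dropWhile ?P s \<noteq> []" using ms by (auto simp: dropWhile_eq_Nil_conv)
    have "hd (dropWhile ?P s) = m" using hd_dropWhile[OF ne] by simp
    then have dw: "dropWhile ?P s = m # tl (dropWhile ?P s)" using ne by (cases "dropWhile ?P s") auto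
    show ?thesis using takeWhile_dropWhile_id[of ?P s] dw by simp
  qed
  have A2: "(set (takeWhile ?P s), takeWhile ?P s, tl (dropWhile ?P s)) \<in> ?T"
    if s: "s \<in> permutations_of_set S" for s
  proof -
    have eq: "s = takeWhile ?P s @ m # tl (dropWhile ?P s)" using A1[OF s] by simp
    have ds: "distinct s" "set s = S" using s by (auto dest: permutations_of_setD)
    have d2: "distinct (takeWhile ?P s @ m # tl (dropWhile ?P s))" using ds eq by simp
    have st: "set (takeWhile ?P s @ m # tl (dropWhile ?P s)) = S" using ds eq by simp
    show ?thesis using d2 st by (auto intro!: permutations_of_setI)
  qed
  have A3: "(set (takeWhile ?P (a @ m # b)), takeWhile ?P (a @ m # b), tl (dropWhile ?P (a @ m # b))) = (X, a, b)"
    and A4: "a @ m # b \<in> permutations_of_set S"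
    if z: "(X, a, b) \<in> ?T" for X a b
  proof -
    have a: "set a = X" "distinct a" and b: "set b = S - {m} - X" "distinct b" and X: "X \<subseteq> S - {m}"
      using z by (auto dest: permutations_of_setD)
    have ma: "\<forall>x\<in>set a. x \<noteq> m" using a X by auto
    have tw: "takeWhile ?P (a @ m # b) = a" using ma by (simp add: takeWhile_append2)
    have dw: "dropWhile ?P (a @ m # b) = m # b" using ma by (simp add: dropWhile_append2)
    show "(set (takeWhile ?P (a @ m # b)), takeWhile ?P (a @ m # b), tl (dropWhile ?P (a @ m # b))) = (X, a, b)"
      using tw dw a by simp
    show "a @ m # b \<in> permutations_of_set S"
      using a b X m by (auto intro!: permutations_of_setI)
  qed
  have R: "(\<Sum>s\<in>permutations_of_set S. f s) = (\<Sum>z\<in>?T. f (fst (snd z) @ m # snd (snd z)))"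
    apply (rule sum.reindex_bij_witness[where j = "\<lambda>s. (set (takeWhile ?P s), takeWhile ?P s, tl (dropWhile ?P s))"
         and i = "\<lambda>z. fst (snd z) @ m # snd (snd z)"])
    subgoal for s using A1 by simp
    subgoal for s using A2 by simp
    subgoal for z using A3[of "fst z" "fst (snd z)" "snd (snd z)"] by simp
    subgoal for z using A4[of "fst z" "fst (snd z)" "snd (snd z)"] by simp
    subgoal for s using A1 by simp
    done
  show ?thesis using c1 c2 R by simp
qed

lemma sum_Pow_card:
  fixes h :: "nat \<Rightarrow> real"
  assumes "finite S"
  shows "(\<Sum>X\<in>Pow S. h (card X)) = (\<Sum>k\<le>card S. real (card S choose k) * h k)"
proof -
  have "(\<Sum>X\<in>Pow S. h (card X)) = (\<Sum>k\<in>{..card S}. \<Sum>X\<in>{X. X \<in> Pow S \<and> card X = k}. h (card X))"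
    by (rule sum.group[symmetric]) (use assms in \<open>auto intro: card_mono\<close>)
  also have "\<dots> = (\<Sum>k\<in>{..card S}. real (card S choose k) * h k)"
  proof (rule sum.cong[OF refl])
    fix k
    have "(\<Sum>X\<in>{X. X \<in> Pow S \<and> card X = k}. h (card X)) = (\<Sum>X\<in>{X. X \<subseteq> S \<and> card X = k}. h k)"
      by (rule sum.cong) auto
    also have "\<dots> = real (card {X. X \<subseteq> S \<and> card X = k}) * h k" by simp
    also have "\<dots> = real (card S choose k) * h k" using n_subsets[OF assms] by simp
    finally show "(\<Sum>X\<in>{X. X \<in> Pow S \<and> card X = k}. h (card X)) = real (card S choose k) * h k" .
  qed
  finally show ?thesis .
qed


lemma cnt_split:
  assumes "\<forall>x\<in>set a. m < x" "\<forall>x\<in>set b. m < x"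
  shows "cnt NI NI (a @ m # b) = cnt NI NI a + (if a = [] \<and> b \<noteq> [] then 1 else 0) + cnt NI NI b"
    and "cnt PI NI (a @ m # b) = cnt PI NI a + cnt NI NI b"
    and "cnt NI PI (a @ m # b) = cnt NI NI a + (if a = [] then 1 else 0) + cnt NI PI b"
    and "cnt PI PI (a @ m # b) = cnt PI NI a + cnt NI PI b"
proof -
  have la: "a \<noteq> [] \<Longrightarrow> m < last a" using assms(1) by auto
  have hb: "b \<noteq> [] \<Longrightarrow> m < hd b" using assms(2) by auto
  note e = cnt_append cnt_FI_R[OF assms(1)] cnt_FI_L[OF assms(2)] cnt_Cons_L
  show "cnt NI NI (a @ m # b) = cnt NI NI a + (if a = [] \<and> b \<noteq> [] then 1 else 0) + cnt NI NI b"
    using la hb by (cases "a = []"; cases "b = []") (auto simp: e lb_def rb_def)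
  show "cnt PI NI (a @ m # b) = cnt PI NI a + cnt NI NI b"
    using la hb by (cases "a = []"; cases "b = []") (auto simp: e lb_def rb_def)
  show "cnt NI PI (a @ m # b) = cnt NI NI a + (if a = [] then 1 else 0) + cnt NI PI b"
    using la hb by (cases "a = []"; cases "b = []") (auto simp: e lb_def rb_def)
  show "cnt PI PI (a @ m # b) = cnt PI NI a + cnt NI PI b"
    using la hb by (cases "a = []"; cases "b = []") (auto simp: e lb_def rb_def)
qed

definition TS :: "real \<Rightarrow> nat set \<Rightarrow> real" where
  "TS u S = (\<Sum>s\<in>permutations_of_set S. u ^ cnt NI NI s)"
definition AS :: "real \<Rightarrow> real \<Rightarrow> nat set \<Rightarrow> real" where
  "AS u x S = (\<Sum>s\<in>permutations_of_set S. u ^ cnt PI NI s * x ^ lrc PI s)"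
definition BS :: "real \<Rightarrow> real \<Rightarrow> nat set \<Rightarrow> real" where
  "BS u y S = (\<Sum>s\<in>permutations_of_set S. u ^ cnt NI PI s * y ^ rlc s)"
definition FS :: "real \<Rightarrow> real \<Rightarrow> real \<Rightarrow> nat set \<Rightarrow> real" where
  "FS u x y S = (\<Sum>s\<in>permutations_of_set S. u ^ cnt PI PI s * x ^ lrc PI s * y ^ rlc s)"

lemma elems_gt:
  assumes "finite S" "X \<in> Pow (S - {Min S})" "a \<in> permutations_of_set X" "b \<in> permutations_of_set (S - {Min S} - X)"
  shows "\<forall>x\<in>set a. Min S < x" "\<forall>x\<in>set b. Min S < x"
    "a = [] \<longleftrightarrow> X = {}" "b = [] \<longleftrightarrow> S - {Min S} - X = {}"
proof -
  from assms have a: "set a = X" and b: "set b = S - {Min S} - X" and X: "X \<subseteq> S - {Min S}"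
    by (auto dest: permutations_of_setD)
  have lt: "Min S < x" if x: "x \<in> S - {Min S}" for x
  proof -
    have "Min S \<le> x" using Min_le[OF assms(1)] x by auto
    moreover have "x \<noteq> Min S" using x by auto
    ultimately show ?thesis by simp
  qed
  show "\<forall>x\<in>set a. Min S < x" "\<forall>x\<in>set b. Min S < x"
    "a = [] \<longleftrightarrow> X = {}" "b = [] \<longleftrightarrow> S - {Min S} - X = {}"
    using a b X lt by auto
qed

lemma sum_prod3:
  fixes f g :: "'a \<Rightarrow> real"
  shows "(\<Sum>a\<in>A. \<Sum>b\<in>B. f a * g b * c) = sum f A * sum g B * c"
proof -
  have "(\<Sum>b\<in>B. f a * g b * c) = (f a * c) * sum g B" for a
    by (simp add: sum_distrib_left mult_ac)
  then have "(\<Sum>a\<in>A. \<Sum>b\<in>B. f a * g b * c) = (\<Sum>a\<in>A. (f a * c) * sum g B)" by simp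
  also have "\<dots> = (\<Sum>a\<in>A. f a * c) * sum g B" by (rule sum_distrib_right[symmetric])
  also have "(\<Sum>a\<in>A. f a * c) = sum f A * c" by (rule sum_distrib_right[symmetric])
  also have "sum f A * c * sum g B = sum f A * sum g B * c" by (simp add: mult_ac)
  finally show ?thesis .
qed

lemma pow_if: "(u::real) ^ (p + (if c then 1 else 0) + q) = u ^ p * u ^ q * (if c then u else 1)"
  by (cases c) (simp_all add: power_add)

lemma TS_rec:
  assumes fin: "finite S" and ne: "S \<noteq> {}"
  shows "TS u S = (\<Sum>X\<in>Pow (S - {Min S}). TS u X * TS u (S - {Min S} - X) *
            (if X = {} \<and> S - {Min S} - X \<noteq> {} then u else 1))"
proof -
  let ?m = "Min S"
  have "TS u S = (\<Sum>X\<in>Pow (S - {?m}). \<Sum>a\<in>permutations_of_set X. \<Sum>b\<in>permutations_of_set (S - {?m} - X).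
          u ^ cnt NI NI (a @ ?m # b))"
    unfolding TS_def by (rule perm_decomp[OF fin Min_in[OF fin ne]])
  also have "\<dots> = (\<Sum>X\<in>Pow (S - {?m}). \<Sum>a\<in>permutations_of_set X. \<Sum>b\<in>permutations_of_set (S - {?m} - X).
          u ^ cnt NI NI a * u ^ cnt NI NI b * (if X = {} \<and> S - {?m} - X \<noteq> {} then u else 1))"
  proof (intro sum.cong refl)
    fix X a b assume h: "X \<in> Pow (S - {?m})" "a \<in> permutations_of_set X" "b \<in> permutations_of_set (S - {?m} - X)"
    note g = elems_gt[OF fin h]
    show "u ^ cnt NI NI (a @ ?m # b) = u ^ cnt NI NI a * u ^ cnt NI NI b * (if X = {} \<and> S - {?m} - X \<noteq> {} then u else 1)"
    proof -
      have c: "(a = [] \<and> b \<noteq> []) = (X = {} \<and> S - {?m} - X \<noteq> {})" using g(3,4) by simp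
      show ?thesis by (simp only: cnt_split(1)[OF g(1,2)] c pow_if)
    qed
  qed
  also have "\<dots> = (\<Sum>X\<in>Pow (S - {?m}). TS u X * TS u (S - {?m} - X) *
            (if X = {} \<and> S - {?m} - X \<noteq> {} then u else 1))"
    unfolding TS_def by (simp only: sum_prod3)
  finally show ?thesis .
qed

lemma AS_rec:
  assumes fin: "finite S" and ne: "S \<noteq> {}"
  shows "AS u x S = x * (\<Sum>X\<in>Pow (S - {Min S}). AS u x X * TS u (S - {Min S} - X))"
proof -
  let ?m = "Min S"
  have "AS u x S = (\<Sum>X\<in>Pow (S - {?m}). \<Sum>a\<in>permutations_of_set X. \<Sum>b\<in>permutations_of_set (S - {?m} - X).
          u ^ cnt PI NI (a @ ?m # b) * x ^ lrc PI (a @ ?m # b))"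
    unfolding AS_def by (rule perm_decomp[OF fin Min_in[OF fin ne]])
  also have "\<dots> = (\<Sum>X\<in>Pow (S - {?m}). \<Sum>a\<in>permutations_of_set X. \<Sum>b\<in>permutations_of_set (S - {?m} - X).
          (u ^ cnt PI NI a * x ^ lrc PI a) * u ^ cnt NI NI b * x)"
  proof (intro sum.cong refl)
    fix X a b assume h: "X \<in> Pow (S - {?m})" "a \<in> permutations_of_set X" "b \<in> permutations_of_set (S - {?m} - X)"
    note g = elems_gt[OF fin h]
    show "u ^ cnt PI NI (a @ ?m # b) * x ^ lrc PI (a @ ?m # b) = (u ^ cnt PI NI a * x ^ lrc PI a) * u ^ cnt NI NI b * x"
      by (simp add: cnt_split(2)[OF g(1,2)] lrc_append[OF g(1)] lrc_zero[OF g(2)] power_add)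
  qed
  also have "\<dots> = (\<Sum>X\<in>Pow (S - {?m}). AS u x X * TS u (S - {?m} - X) * x)"
    unfolding TS_def AS_def by (simp only: sum_prod3)
  finally show ?thesis by (simp add: sum_distrib_left mult_ac)
qed

lemma BS_rec:
  assumes fin: "finite S" and ne: "S \<noteq> {}"
  shows "BS u y S = y * (\<Sum>X\<in>Pow (S - {Min S}). TS u X * BS u y (S - {Min S} - X) *
            (if X = {} then u else 1))"
proof -
  let ?m = "Min S"
  have "BS u y S = (\<Sum>X\<in>Pow (S - {?m}). \<Sum>a\<in>permutations_of_set X. \<Sum>b\<in>permutations_of_set (S - {?m} - X).
          u ^ cnt NI PI (a @ ?m # b) * y ^ rlc (a @ ?m # b))"
    unfolding BS_def by (rule perm_decomp[OF fin Min_in[OF fin ne]])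
  also have "\<dots> = (\<Sum>X\<in>Pow (S - {?m}). \<Sum>a\<in>permutations_of_set X. \<Sum>b\<in>permutations_of_set (S - {?m} - X).
          u ^ cnt NI NI a * (u ^ cnt NI PI b * y ^ rlc b) * (y * (if X = {} then u else 1)))"
  proof (intro sum.cong refl)
    fix X a b assume h: "X \<in> Pow (S - {?m})" "a \<in> permutations_of_set X" "b \<in> permutations_of_set (S - {?m} - X)"
    note g = elems_gt[OF fin h]
    show "u ^ cnt NI PI (a @ ?m # b) * y ^ rlc (a @ ?m # b) =
          u ^ cnt NI NI a * (u ^ cnt NI PI b * y ^ rlc b) * (y * (if X = {} then u else 1))"
      by (simp only: cnt_split(3)[OF g(1,2)] rlc_append[OF g(1,2)] g(3) pow_if) (simp add: mult_ac)
  qed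
  also have "\<dots> = (\<Sum>X\<in>Pow (S - {?m}). TS u X * BS u y (S - {?m} - X) * (y * (if X = {} then u else 1)))"
    unfolding TS_def BS_def by (simp only: sum_prod3)
  finally show ?thesis by (simp add: sum_distrib_left mult_ac)
qed

lemma FS_rec:
  assumes fin: "finite S" and ne: "S \<noteq> {}"
  shows "FS u x y S = x * y * (\<Sum>X\<in>Pow (S - {Min S}). AS u x X * BS u y (S - {Min S} - X))"
proof -
  let ?m = "Min S"
  have "FS u x y S = (\<Sum>X\<in>Pow (S - {?m}). \<Sum>a\<in>permutations_of_set X. \<Sum>b\<in>permutations_of_set (S - {?m} - X).
          u ^ cnt PI PI (a @ ?m # b) * x ^ lrc PI (a @ ?m # b) * y ^ rlc (a @ ?m # b))"
    unfolding FS_def by (rule perm_decomp[OF fin Min_in[OF fin ne]])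
  also have "\<dots> = (\<Sum>X\<in>Pow (S - {?m}). \<Sum>a\<in>permutations_of_set X. \<Sum>b\<in>permutations_of_set (S - {?m} - X).
          (u ^ cnt PI NI a * x ^ lrc PI a) * (u ^ cnt NI PI b * y ^ rlc b) * (x * y))"
  proof (intro sum.cong refl)
    fix X a b assume h: "X \<in> Pow (S - {?m})" "a \<in> permutations_of_set X" "b \<in> permutations_of_set (S - {?m} - X)"
    note g = elems_gt[OF fin h]
    show "u ^ cnt PI PI (a @ ?m # b) * x ^ lrc PI (a @ ?m # b) * y ^ rlc (a @ ?m # b) =
          (u ^ cnt PI NI a * x ^ lrc PI a) * (u ^ cnt NI PI b * y ^ rlc b) * (x * y)"
      by (simp add: cnt_split(4)[OF g(1,2)] rlc_append[OF g(1,2)] lrc_append[OF g(1)] lrc_zero[OF g(2)] power_add)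
  qed
  also have "\<dots> = (\<Sum>X\<in>Pow (S - {?m}). AS u x X * BS u y (S - {?m} - X) * (x * y))"
    unfolding AS_def BS_def by (simp only: sum_prod3)
  finally show ?thesis by (simp add: sum_distrib_left mult_ac)
qed


lemma Pow_card_sum:
  assumes "finite S'" "card S' = n" "\<And>X. X \<subseteq> S' \<Longrightarrow> F X = h (card X)"
  shows "(\<Sum>X\<in>Pow S'. F X) = (\<Sum>k\<le>n. real (n choose k) * h k)"
proof -
  have "(\<Sum>X\<in>Pow S'. F X) = (\<Sum>X\<in>Pow S'. h (card X))" using assms(3) by (intro sum.cong) auto
  also have "\<dots> = (\<Sum>k\<le>n. real (n choose k) * h k)" using sum_Pow_card[OF assms(1), of h] assms(2) by simp
  finally show ?thesis .
qed

lemma sub_facts: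
  assumes "finite S" "card S = Suc n" "X \<subseteq> S - {Min S}"
  shows "finite X" "card X \<le> n" "finite (S - {Min S} - X)" "card (S - {Min S} - X) = n - card X"
    "card (S - {Min S} - X) \<le> n" "X = {} \<longleftrightarrow> card X = 0" "S - {Min S} - X = {} \<longleftrightarrow> n - card X = 0"
    "S \<noteq> {}" "finite (S - {Min S})" "card (S - {Min S}) = n"
proof -
  show ne: "S \<noteq> {}" using assms(2) by auto
  have m: "Min S \<in> S" using Min_in[OF assms(1) ne] .
  show c: "card (S - {Min S}) = n" using assms(1,2) m by simp
  show f: "finite (S - {Min S})" using assms(1) by simp
  show fX: "finite X" using assms(3) f finite_subset by blast
  show "card X \<le> n" using card_mono[OF f assms(3)] c by simp
  show f2: "finite (S - {Min S} - X)" using f by simp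
  show c2: "card (S - {Min S} - X) = n - card X" using card_Diff_subset[OF fX assms(3)] c by simp
  then show "card (S - {Min S} - X) \<le> n" by simp
  show "X = {} \<longleftrightarrow> card X = 0" using fX by simp
  show "S - {Min S} - X = {} \<longleftrightarrow> n - card X = 0" using c2 f2 by (metis card_0_eq)
qed

lemma sub_facts0:
  assumes "finite S" "card S = Suc n"
  shows "S \<noteq> {}" "finite (S - {Min S})" "card (S - {Min S}) = n"
proof -
  show ne: "S \<noteq> {}" using assms(2) by auto
  have m: "Min S \<in> S" using Min_in[OF assms(1) ne] .
  show "card (S - {Min S}) = n" using assms(1,2) m by simp
  show "finite (S - {Min S})" using assms(1) by simp
qed

lemma TS_step:
  assumes fin: "finite S" and cS: "card S = Suc n"
    and IH: "\<And>Y. finite Y \<Longrightarrow> card Y \<le> n \<Longrightarrow> TS u Y = TS u {..<card Y}"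
  shows "TS u S = (\<Sum>k\<le>n. real (n choose k) *
            (TS u {..<k} * TS u {..<n-k} * (if k = 0 \<and> n - k \<noteq> 0 then u else 1)))" (is "_ = ?rhs")
proof -
  note sf = sub_facts0[OF fin cS]
  have "TS u S = (\<Sum>X\<in>Pow (S - {Min S}). TS u X * TS u (S - {Min S} - X) * (if X = {} \<and> S - {Min S} - X \<noteq> {} then u else 1))" by (rule TS_rec[OF fin sf(1)])
  also have "\<dots> = ?rhs"
  proof (rule Pow_card_sum[OF sf(2,3)])
    fix X assume X: "X \<subseteq> S - {Min S}"
    note s = sub_facts[OF fin cS X]
    show "TS u X * TS u (S - {Min S} - X) * (if X = {} \<and> S - {Min S} - X \<noteq> {} then u else 1) =
      TS u {..<card X} * TS u {..<n - card X} * (if card X = 0 \<and> n - card X \<noteq> 0 then u else 1)"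
      by (simp only: IH[OF s(1,2)] IH[OF s(3,5)] s(4,6,7))
  qed
  finally show ?thesis .
qed

lemma TS_card: "finite S \<Longrightarrow> TS u S = TS u {..<card S}"
proof (induction "card S" arbitrary: S rule: less_induct)
  case less
  show ?case
  proof (cases "card S")
    case 0
    then show ?thesis using less.prems by simp
  next
    case (Suc n)
    have IH: "TS u Y = TS u {..<card Y}" if "finite Y" "card Y \<le> n" for Y
      by (rule less.hyps) (use that Suc in simp_all)
    show ?thesis
      by (simp only: Suc TS_step[OF less.prems Suc IH] TS_step[OF finite_lessThan card_lessThan IH])
  qed
qed

lemma AS_step:
  assumes fin: "finite S" and cS: "card S = Suc n"
    and IH: "\<And>Y. finite Y \<Longrightarrow> card Y \<le> n \<Longrightarrow> AS u x Y = AS u x {..<card Y}"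
  shows "AS u x S = x * (\<Sum>k\<le>n. real (n choose k) * (AS u x {..<k} * TS u {..<n-k}))" (is "_ = ?rhs")
proof -
  note sf = sub_facts0[OF fin cS]
  have "AS u x S = x * (\<Sum>X\<in>Pow (S - {Min S}). AS u x X * TS u (S - {Min S} - X))" by (rule AS_rec[OF fin sf(1)])
  also have "\<dots> = ?rhs"
  proof (rule arg_cong[where f="\<lambda>z. x * z"], rule Pow_card_sum[OF sf(2,3)])
    fix X assume X: "X \<subseteq> S - {Min S}"
    note s = sub_facts[OF fin cS X]
    show "AS u x X * TS u (S - {Min S} - X) = AS u x {..<card X} * TS u {..<n - card X}"
      using IH[OF s(1,2)] TS_card[OF s(3)] s(4) by simp
  qed
  finally show ?thesis .
qed

lemma AS_card: "finite S \<Longrightarrow> AS u x S = AS u x {..<card S}"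
proof (induction "card S" arbitrary: S rule: less_induct)
  case less
  show ?case
  proof (cases "card S")
    case 0
    then show ?thesis using less.prems by simp
  next
    case (Suc n)
    have IH: "AS u x Y = AS u x {..<card Y}" if "finite Y" "card Y \<le> n" for Y
      by (rule less.hyps) (use that Suc in simp_all)
    show ?thesis
      by (simp only: Suc AS_step[OF less.prems Suc IH] AS_step[OF finite_lessThan card_lessThan IH])
  qed
qed

lemma BS_step:
  assumes fin: "finite S" and cS: "card S = Suc n"
    and IH: "\<And>Y. finite Y \<Longrightarrow> card Y \<le> n \<Longrightarrow> BS u y Y = BS u y {..<card Y}"
  shows "BS u y S = y * (\<Sum>k\<le>n. real (n choose k) *
            (TS u {..<k} * BS u y {..<n-k} * (if k = 0 then u else 1)))" (is "_ = ?rhs")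
proof -
  note sf = sub_facts0[OF fin cS]
  have "BS u y S = y * (\<Sum>X\<in>Pow (S - {Min S}). TS u X * BS u y (S - {Min S} - X) * (if X = {} then u else 1))" by (rule BS_rec[OF fin sf(1)])
  also have "\<dots> = ?rhs"
  proof (rule arg_cong[where f="\<lambda>z. y * z"], rule Pow_card_sum[OF sf(2,3)])
    fix X assume X: "X \<subseteq> S - {Min S}"
    note s = sub_facts[OF fin cS X]
    show "TS u X * BS u y (S - {Min S} - X) * (if X = {} then u else 1) =
      TS u {..<card X} * BS u y {..<n - card X} * (if card X = 0 then u else 1)"
      by (simp only: TS_card[OF s(1)] IH[OF s(3,5)] s(4,6))
  qed
  finally show ?thesis .
qed

lemma BS_card: "finite S \<Longrightarrow> BS u y S = BS u y {..<card S}"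
proof (induction "card S" arbitrary: S rule: less_induct)
  case less
  show ?case
  proof (cases "card S")
    case 0
    then show ?thesis using less.prems by simp
  next
    case (Suc n)
    have IH: "BS u y Y = BS u y {..<card Y}" if "finite Y" "card Y \<le> n" for Y
      by (rule less.hyps) (use that Suc in simp_all)
    show ?thesis
      by (simp only: Suc BS_step[OF less.prems Suc IH] BS_step[OF finite_lessThan card_lessThan IH])
  qed
qed

lemma FS_step:
  assumes fin: "finite S" and cS: "card S = Suc n"
  shows "FS u x y S = x * y * (\<Sum>k\<le>n. real (n choose k) * (AS u x {..<k} * BS u y {..<n-k}))" (is "_ = ?rhs")
proof -
  note sf = sub_facts0[OF fin cS]
  have "FS u x y S = x * y * (\<Sum>X\<in>Pow (S - {Min S}). AS u x X * BS u y (S - {Min S} - X))" by (rule FS_rec[OF fin sf(1)])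
  also have "\<dots> = ?rhs"
  proof (rule arg_cong[where f="\<lambda>z. x * y * z"], rule Pow_card_sum[OF sf(2,3)])
    fix X assume X: "X \<subseteq> S - {Min S}"
    note s = sub_facts[OF fin cS X]
    show "AS u x X * BS u y (S - {Min S} - X) = AS u x {..<card X} * BS u y {..<n - card X}"
      using AS_card[OF s(1)] BS_card[OF s(3)] s(4) by simp
  qed
  finally show ?thesis .
qed

definition tq :: "real \<Rightarrow> nat \<Rightarrow> real" where "tq u n = TS u {..<n}"
definition aq :: "real \<Rightarrow> real \<Rightarrow> nat \<Rightarrow> real" where "aq u x n = AS u x {..<n}"
definition bq :: "real \<Rightarrow> real \<Rightarrow> nat \<Rightarrow> real" where "bq u y n = BS u y {..<n}"

lemma tq0: "tq u 0 = 1" and aq0: "aq u x 0 = 1" and bq0: "bq u y 0 = 1"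
  by (simp_all add: tq_def aq_def bq_def TS_def AS_def BS_def)

lemma tq_Suc: "tq u (Suc n) = (\<Sum>k\<le>n. real (n choose k) *
            (tq u k * tq u (n-k) * (if k = 0 \<and> n - k \<noteq> 0 then u else 1)))"
  unfolding tq_def apply (rule TS_step[of "{..<Suc n}" n]) apply simp apply simp apply (rule TS_card) apply assumption done

lemma aq_Suc: "aq u x (Suc n) = x * (\<Sum>k\<le>n. real (n choose k) * (aq u x k * tq u (n-k)))"
  unfolding tq_def aq_def apply (rule AS_step[of "{..<Suc n}" n]) apply simp apply simp apply (rule AS_card) apply assumption done

lemma bq_Suc: "bq u y (Suc n) = y * (\<Sum>k\<le>n. real (n choose k) *
            (tq u k * bq u y (n-k) * (if k = 0 then u else 1)))"
  unfolding tq_def bq_def apply (rule BS_step[of "{..<Suc n}" n]) apply simp apply simp apply (rule BS_card) apply assumption done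

lemma FS_seq: "finite S \<Longrightarrow> card S = Suc n \<Longrightarrow>
   FS u x y S = x * y * (\<Sum>k\<le>n. real (n choose k) * (aq u x k * bq u y (n-k)))"
  unfolding aq_def bq_def by (rule FS_step) assumption+


definition egf :: "(nat \<Rightarrow> real) \<Rightarrow> real fps" where
  "egf f = Abs_fps (\<lambda>n. f n / fact n)"

lemma egf_nth [simp]: "fps_nth (egf f) n = f n / fact n"
  by (simp add: egf_def)

lemma egf_mult_nth:
  "fps_nth ((egf f * egf g)) n = (\<Sum>k\<le>n. real (n choose k) * (f k * g (n-k))) / fact n"
proof -
  have "fps_nth ((egf f * egf g)) n = (\<Sum>k\<le>n. f k / fact k * (g (n-k) / fact (n-k)))"
    by (simp add: fps_mult_nth atLeast0AtMost)
  also have "\<dots> = (\<Sum>k\<le>n. real (n choose k) * (f k * g (n-k)) / fact n)"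
  proof (rule sum.cong[OF refl])
    fix k assume "k \<in> {..n}"
    then have k: "k \<le> n" by simp
    have "real (n choose k) = fact n / (fact k * fact (n-k))" by (rule binomial_fact[OF k])
    then show "f k / fact k * (g (n-k) / fact (n-k)) = real (n choose k) * (f k * g (n-k)) / fact n"
      by (simp add: field_simps)
  qed
  also have "\<dots> = (\<Sum>k\<le>n. real (n choose k) * (f k * g (n-k))) / fact n"
    by (simp add: sum_divide_distrib)
  finally show ?thesis .
qed

lemma egf_deriv_nth: "fps_nth (fps_deriv (egf f)) n = f (Suc n) / fact n"
  by (simp add: field_simps del: of_nat_Suc)

lemma sum_if0:
  "(\<Sum>k\<le>n. real (n choose k) * (p k * (if k = 0 \<and> c then w else 1))) =
   (\<Sum>k\<le>n. real (n choose k) * p k) + (if c then (w - 1) * p 0 else 0)"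
proof -
  have "(\<Sum>k\<le>n. real (n choose k) * (p k * (if k = 0 \<and> c then w else 1))) =
        (\<Sum>k\<le>n. real (n choose k) * p k + (if k = 0 then (if c then (w - 1) * p 0 else 0) else 0))"
    by (intro sum.cong refl) (auto simp: algebra_simps)
  also have "\<dots> = (\<Sum>k\<le>n. real (n choose k) * p k) + (if c then (w - 1) * p 0 else 0)"
    by (simp add: sum.distrib)
  finally show ?thesis .
qed

context
  fixes u :: real
begin

definition TT where "TT = egf (tq u)"
definition AA where "AA = egf (aq u (-1/2))"
definition BB where "BB = egf (bq u (-1/2))"
definition hh :: "real fps" where "hh = fps_const (1/2)"
definition vv :: "real fps" where "vv = fps_const u"

lemma dT: "fps_deriv TT = TT * TT + fps_const (u - 1) * TT + fps_const (1 - u)"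
proof (rule fps_ext)
  fix n
  have rec: "tq u (Suc n) = (\<Sum>k\<le>n. real (n choose k) * (tq u k * tq u (n-k))) + (if n \<noteq> 0 then (u - 1) * tq u n else 0)"
  proof -
    have "tq u (Suc n) = (\<Sum>k\<le>n. real (n choose k) * ((tq u k * tq u (n-k)) * (if k = 0 \<and> n \<noteq> 0 then u else 1)))"
      unfolding tq_Suc by (intro sum.cong refl) auto
    also have "\<dots> = (\<Sum>k\<le>n. real (n choose k) * (tq u k * tq u (n-k))) + (if n \<noteq> 0 then (u - 1) * tq u n else 0)"
      by (subst sum_if0) (simp add: tq0)
    finally show ?thesis .
  qed
  have L: "fps_nth (fps_deriv TT) n = tq u (Suc n) / fact n" by (simp only: TT_def egf_deriv_nth)
  have R: "fps_nth (TT * TT + fps_const (u - 1) * TT + fps_const (1 - u)) n =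
     (\<Sum>k\<le>n. real (n choose k) * (tq u k * tq u (n-k))) / fact n + (u - 1) * (tq u n / fact n) + (if n = 0 then 1 - u else 0)"
    by (simp add: TT_def egf_mult_nth)
  show "fps_nth (fps_deriv TT) n = fps_nth (TT * TT + fps_const (u - 1) * TT + fps_const (1 - u)) n"
    unfolding L R rec by (cases "n = 0") (simp_all add: tq0 add_divide_distrib)
qed

lemma dA: "fps_deriv AA = fps_const (-1/2) * (AA * TT)"
proof (rule fps_ext)
  fix n
  have L: "fps_nth (fps_deriv AA) n = aq u (-1/2) (Suc n) / fact n" by (simp only: AA_def egf_deriv_nth)
  have R: "fps_nth (fps_const (-1/2) * (AA * TT)) n =
     (-1/2) * ((\<Sum>k\<le>n. real (n choose k) * (aq u (-1/2) k * tq u (n-k))) / fact n)"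
    by (simp only: AA_def TT_def fps_mult_left_const_nth egf_mult_nth)
  show "fps_nth (fps_deriv AA) n = fps_nth (fps_const (-1/2) * (AA * TT)) n"
    unfolding L R aq_Suc by simp
qed

lemma dB: "fps_deriv BB = fps_const (-1/2) * (TT * BB + fps_const (u - 1) * BB)"
proof (rule fps_ext)
  fix n
  have rec: "bq u (-1/2) (Suc n) = (-1/2) * ((\<Sum>k\<le>n. real (n choose k) * (tq u k * bq u (-1/2) (n-k))) + (u - 1) * bq u (-1/2) n)"
  proof -
    have "bq u (-1/2) (Suc n) = (-1/2) * (\<Sum>k\<le>n. real (n choose k) * ((tq u k * bq u (-1/2) (n-k)) * (if k = 0 \<and> True then u else 1)))"
      unfolding bq_Suc by simp
    also have "\<dots> = (-1/2) * ((\<Sum>k\<le>n. real (n choose k) * (tq u k * bq u (-1/2) (n-k))) + (u - 1) * bq u (-1/2) n)"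
      by (subst sum_if0) (simp add: tq0)
    finally show ?thesis .
  qed
  have L: "fps_nth (fps_deriv BB) n = bq u (-1/2) (Suc n) / fact n" by (simp only: BB_def egf_deriv_nth)
  have R: "fps_nth (fps_const (-1/2) * (TT * BB + fps_const (u - 1) * BB)) n =
     (-1/2) * ((\<Sum>k\<le>n. real (n choose k) * (tq u k * bq u (-1/2) (n-k))) / fact n + (u - 1) * (bq u (-1/2) n / fact n))"
    by (simp only: BB_def TT_def fps_mult_left_const_nth egf_mult_nth fps_add_nth egf_nth)
  show "fps_nth (fps_deriv BB) n = fps_nth (fps_const (-1/2) * (TT * BB + fps_const (u - 1) * BB)) n"
    unfolding L R rec by (simp add: field_simps)
qed

definition PP where "PP = AA * BB"

lemma dP: "fps_deriv PP = fps_const (-1/2) * (PP * (TT + TT + fps_const (u - 1)))"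
  unfolding PP_def by (simp only: fps_deriv_mult dA dB) (simp add: algebra_simps)

lemma ddP: "fps_deriv (fps_deriv PP) = fps_const ((u - 1) * (u + 3) / 4) * PP"
proof -
  let ?h = "fps_const (-1/2) :: real fps" and ?w = "fps_const (u - 1) :: real fps"
  have m1: "fps_const (-1::real) = - 1" by (metis fps_const_1_eq_1 fps_const_neg)
  have r1: "?h + ?h = -1" by (simp add: m1)
  have r2: "fps_const (1 - u) = - ?w" by simp
  have "(u - 1) * (u + 3) / 4 = (u - 1) + (-1/2) * (-1/2) * (u - 1) * (u - 1)" by (simp add: field_simps)
  then have r3: "fps_const ((u - 1) * (u + 3) / 4) = ?w + ?h * ?h * ?w * ?w"
    by (simp only: fps_const_mult[symmetric] fps_const_add[symmetric])
  have "fps_deriv (fps_deriv PP) = fps_deriv (?h * (PP * (TT + TT + ?w)))" by (simp only: dP)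
  also have "\<dots> = ?h * (PP * (fps_deriv TT + fps_deriv TT) + fps_deriv PP * (TT + TT + ?w))"
    by (simp only: fps_deriv_mult_const_left fps_deriv_mult fps_deriv_add fps_deriv_const) simp
  also have "\<dots> = fps_const ((u - 1) * (u + 3) / 4) * PP"
    unfolding r3 dP dT r2 using r1 by algebra
  finally show ?thesis .
qed

definition pq where "pq n = (\<Sum>k\<le>n. real (n choose k) * (aq u (-1/2) k * bq u (-1/2) (n-k)))"

lemma PP_nth: "fps_nth PP n = pq n / fact n"
  unfolding PP_def AA_def BB_def pq_def by (rule egf_mult_nth)

lemma egf_deriv: "fps_deriv (egf f) = egf (\<lambda>n. f (Suc n))"
  by (rule fps_ext) (simp only: egf_deriv_nth egf_nth)

lemma PP_egf: "PP = egf pq"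
  by (rule fps_ext) (simp only: PP_nth egf_nth)

lemma pq_rec: "pq (Suc (Suc n)) = ((u - 1) * (u + 3) / 4) * pq n"
proof -
  have "fps_nth (fps_deriv (fps_deriv PP)) n = fps_nth (fps_const ((u - 1) * (u + 3) / 4) * PP) n"
    by (simp only: ddP)
  then have "pq (Suc (Suc n)) / fact n = ((u - 1) * (u + 3) / 4) * (pq n / fact n)"
    by (simp only: PP_egf egf_deriv egf_nth fps_mult_left_const_nth)
  moreover have "fact n \<noteq> (0::real)" by simp
  ultimately show ?thesis by (simp add: field_simps)
qed

lemma pq01: "pq 0 = 1" "pq 1 = - (1 + u) / 2"
proof -
  show "pq 0 = 1" by (simp add: pq_def aq0 bq0)
  have a1: "aq u (-1/2) (Suc 0) = -1/2" using aq_Suc[of u "-1/2" 0] by (simp add: aq0 tq0)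
  have b1: "bq u (-1/2) (Suc 0) = -u/2" using bq_Suc[of u "-1/2" 0] by (simp add: bq0 tq0)
  show "pq 1 = - (1 + u) / 2" using a1 b1 by (simp add: pq_def aq0 bq0)
qed

end


definition RR :: "real \<Rightarrow> nat \<Rightarrow> real" where
  "RR u n = (if even n then ((1 + u)\<^sup>2 - 4) ^ (n div 2)
          else - (1 + u) * ((1 + u)\<^sup>2 - 4) ^ (n div 2))"

lemma RR_rec: "RR u (Suc (Suc n)) = ((1 + u)\<^sup>2 - 4) * RR u n"
  by (simp add: RR_def)

lemma pq_closed: "2 ^ n * pq u n = RR u n"
proof -
  have "2 ^ n * pq u n = RR u n \<and> 2 ^ Suc n * pq u (Suc n) = RR u (Suc n)"
  proof (induction n)
    case 0
    then show ?case using pq01[of u] by (simp add: RR_def)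
  next
    case (Suc n)
    have "2 ^ Suc (Suc n) * pq u (Suc (Suc n)) = ((1 + u)\<^sup>2 - 4) * (2 ^ n * pq u n)"
      by (simp add: pq_rec power2_eq_square field_simps)
    then show ?case using Suc.IH RR_rec by simp
  qed
  then show ?thesis by simp
qed

theorem theorem1p8:
  fixes n :: nat and u :: real
  assumes "n \<ge> 1"
  shows "2 ^ n * (\<Sum>s\<in>permutations_of_set {1..n+1}.
            u ^ rda s * (- 1 / 2) ^ (LRmin s + RLmin s - 2)) =
         (if even n then ((1 + u)\<^sup>2 - 4) ^ (n div 2)
          else - (1 + u) * ((1 + u)\<^sup>2 - 4) ^ (n div 2))"
proof -
  have S: "(\<Sum>s\<in>permutations_of_set {1..n+1}. u ^ rda s * (- 1 / 2) ^ (LRmin s + RLmin s - 2))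
      = 4 * FS u (-1/2) (-1/2) {1..n+1}"
    unfolding FS_def sum_distrib_left
  proof (intro sum.cong refl)
    fix s assume s: "s \<in> permutations_of_set {1..n+1}"
    have ss: "set s = {1..n+1}" using permutations_of_setD(1)[OF s] .
    have "s \<noteq> []"
    proof
      assume "s = []"
      then have "{1..n+1} = ({} :: nat set)" using ss by simp
      then show False by simp
    qed
    then obtain l r where l: "lrc PI s = Suc l" and r: "rlc s = Suc r"
      using lrc_pos rlc_pos by (metis Suc_le_D One_nat_def)
    show "u ^ rda s * (- 1 / 2) ^ (LRmin s + RLmin s - 2) =
          4 * (u ^ cnt PI PI s * (-1/2) ^ lrc PI s * (-1/2) ^ rlc s)"
      unfolding rda_cnt LRmin_lrc RLmin_rlc l r by (simp add: power_add)
  qed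
  have F: "FS u (-1/2) (-1/2) {1..n+1} = (-1/2) * (-1/2) * pq u n"
    unfolding pq_def by (rule FS_seq) simp_all
  have "2 ^ n * (\<Sum>s\<in>permutations_of_set {1..n+1}. u ^ rda s * (- 1 / 2) ^ (LRmin s + RLmin s - 2))
      = 2 ^ n * pq u n" unfolding S F by simp
  also have "\<dots> = RR u n" by (rule pq_closed)
  finally show ?thesis unfolding RR_def .
qed

end
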